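(* Let $P,Q,R$ be distributions and let $\alpha\in(1/\sqrt{2},1)$. If $$\mathrm{H}(Q,R)\geq \frac{\sqrt{2}}{\sqrt{2}\alpha-1}\,\mathrm{H}(P,R),$$ then for every $n\geq 1$, with $X_1,\dots,X_n$ i.i.d. from $R$, $$\mathbb{E}\big[\mathrm{T}(P,Q,X^n)\big]\geq 2(1-\alpha^2)\,\mathrm{H}^2(Q,R).$$
   Context: Distributions $P,Q,R$ are probability distributions on a measurable space $\mathcal{X}$, identified with their densities with respect to a common $\sigma$-finite reference measure $\mu$ (e.g. Lebesgue measure, or counting measure in the discrete case). All integrals and norms are taken with respect to $\mu$, with $\|U\|_p = (\int |U|^p\, d\mu)^{1/p}$. The Hellinger distance is $\mathrm{H}(P,Q) = \frac{1}{\sqrt{2}}\|\sqrt{P}-\sqrt{Q}\|_2$. For a sample $X^n=(X_1,\dots,X_n)$, the test statistic is $$\mathrm{T}(P,Q,X^n) = \frac{1}{n}\sum_{i=1}^n \frac{P(X_i)-Q(X_i)}{P(X_i)+Q(X_i)},$$ where a summand is interpreted as $0$ whenever $P(X_i)+Q(X_i)=0$. *)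

theory Defs
  imports "HOL-Probability.Probability"
begin

text \<open>A distribution on the measure space M (with sigma-finite reference measure M)
  is identified with its density: a nonnegative measurable function integrating to 1.\<close>
definition is_density :: "'a measure \<Rightarrow> ('a \<Rightarrow> real) \<Rightarrow> bool" where
  "is_density M P \<longleftrightarrow> P \<in> borel_measurable M \<and> (\<forall>x\<in>space M. 0 \<le> P x)
     \<and> (\<integral>\<^sup>+ x. ennreal (P x) \<partial>M) = 1"

definition hellinger :: "'a measure \<Rightarrow> ('a \<Rightarrow> real) \<Rightarrow> ('a \<Rightarrow> real) \<Rightarrow> real" where
  "hellinger M P Q = (1 / sqrt 2) * sqrt (\<integral> x. (sqrt (P x) - sqrt (Q x))\<^sup>2 \<partial>M)"

definition tsum_term :: "('a \<Rightarrow> real) \<Rightarrow> ('a \<Rightarrow> real) \<Rightarrow> 'a \<Rightarrow> real" where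
  "tsum_term P Q x = (if P x + Q x = 0 then 0 else (P x - Q x) / (P x + Q x))"

definition test_stat :: "('a \<Rightarrow> real) \<Rightarrow> ('a \<Rightarrow> real) \<Rightarrow> nat \<Rightarrow> (nat \<Rightarrow> 'a) \<Rightarrow> real" where
  "test_stat P Q n X = (1 / real n) * (\<Sum>i<n. tsum_term P Q (X i))"

end

theory Submission
  imports Defs
begin


definition KE :: "real \<Rightarrow> real \<Rightarrow> real \<Rightarrow> real \<Rightarrow> real" where
 "KE p q r u = (p^2-q^2)*(2*r^2-(p^2+q^2)) - (p^2+q^2)*(q-r)^2 + 2*(p^2+q^2)*u + 2*(p^2+q^2)*(p-r)^2"

lemma caseA: assumes "r\<ge>0" "r \<le> p" "r \<le> q"
  shows "0 \<le> KE p q r (\<bar>q-r\<bar>*\<bar>p-r\<bar>)"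
proof -
  obtain x y where xy: "x \<ge> 0" "y \<ge> 0" "p = r+x" "q = r+y" using assms
    by (metis add.commute diff_add_cancel diff_ge_0_iff_ge)
  have "KE p q r (\<bar>q-r\<bar>*\<bar>p-r\<bar>) = 2*x*y*y*y + x*x*y*y + 2*x*x*x*y + x*x*x*x + 2*r*y*y*y + 2*r*x*y*y + 8*r*x*x*y + 2*r*r*y*y + 4*r*r*x*y"
    unfolding KE_def xy using xy by (simp add: power2_eq_square algebra_simps)
  also have "\<dots> \<ge> 0" using assms xy by (intro add_nonneg_nonneg mult_nonneg_nonneg) auto
  finally show ?thesis .
qed
lemma caseB: assumes "p\<ge>0" "p \<le> r" "r \<le> q"
  shows "0 \<le> KE p q r (\<bar>q-r\<bar>*\<bar>p-r\<bar>)"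
proof -
  obtain x y where xy: "x \<ge> 0" "y \<ge> 0" "r = p+x" "q = p+x+y" using assms
    by (metis add.commute diff_add_cancel diff_ge_0_iff_ge)
  have "KE p q r (\<bar>q-r\<bar>*\<bar>p-r\<bar>) = 4*x*y*y*y + 9*x*x*y*y + 6*x*x*x*y + x*x*x*x + 2*p*y*y*y + 10*p*x*y*y + 8*p*x*x*y + 2*p*p*y*y + 4*p*p*x*y"
    unfolding KE_def xy using xy by (simp add: power2_eq_square algebra_simps)
  also have "\<dots> \<ge> 0" using assms xy by (intro add_nonneg_nonneg mult_nonneg_nonneg) auto
  finally show ?thesis .
qed
lemma caseC: assumes "q\<ge>0" "q \<le> r" "r \<le> p"
  shows "0 \<le> KE p q r (\<bar>q-r\<bar>*\<bar>p-r\<bar>)"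
proof -
  obtain x y where xy: "x \<ge> 0" "y \<ge> 0" "r = q+x" "p = q+x+y" using assms
    by (metis add.commute diff_add_cancel diff_ge_0_iff_ge)
  have "KE p q r (\<bar>q-r\<bar>*\<bar>p-r\<bar>) = y*y*y*y + 2*x*y*y*y + x*x*y*y + 2*q*x*x*y + 2*q*x*x*x + 4*q*q*x*y + 2*q*q*x*x"
    unfolding KE_def xy using xy by (simp add: power2_eq_square algebra_simps)
  also have "\<dots> \<ge> 0" using assms xy by (intro add_nonneg_nonneg mult_nonneg_nonneg) auto
  finally show ?thesis .
qed
lemma caseD1: assumes "p\<ge>0" "p \<le> q" "q \<le> r"
  shows "0 \<le> KE p q r (\<bar>q-r\<bar>*\<bar>p-r\<bar>)"
proof -
  obtain x y where xy: "x \<ge> 0" "y \<ge> 0" "q = p+x" "r = p+x+y" using assms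
    by (metis add.commute diff_add_cancel diff_ge_0_iff_ge)
  have "KE p q r (\<bar>q-r\<bar>*\<bar>p-r\<bar>) = x*x*y*y + 2*x*x*x*y + x*x*x*x + 2*p*x*y*y + 6*p*p*y*y + 4*p*p*x*y"
    unfolding KE_def xy using xy by (simp add: power2_eq_square algebra_simps)
  also have "\<dots> \<ge> 0" using assms xy by (intro add_nonneg_nonneg mult_nonneg_nonneg) auto
  finally show ?thesis .
qed
lemma caseD2: assumes "q\<ge>0" "q \<le> p" "p \<le> r"
  shows "0 \<le> KE p q r (\<bar>q-r\<bar>*\<bar>p-r\<bar>)"
proof -
  obtain x y where xy: "x \<ge> 0" "y \<ge> 0" "p = q+x" "r = q+x+y" using assms
    by (metis add.commute diff_add_cancel diff_ge_0_iff_ge)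
  have "KE p q r (\<bar>q-r\<bar>*\<bar>p-r\<bar>) = 5*x*x*y*y + 4*x*x*x*y + 10*q*x*y*y + 12*q*x*x*y + 2*q*x*x*x + 6*q*q*y*y + 8*q*q*x*y + 2*q*q*x*x"
    unfolding KE_def xy using xy by (simp add: power2_eq_square algebra_simps)
  also have "\<dots> \<ge> 0" using assms xy by (intro add_nonneg_nonneg mult_nonneg_nonneg) auto
  finally show ?thesis .
qed
lemma KE_nonneg: assumes "p\<ge>0" "q\<ge>0" "r\<ge>0" shows "0 \<le> KE p q r (\<bar>q-r\<bar>*\<bar>p-r\<bar>)"
proof -
  consider "r \<le> p" "r \<le> q" | "p \<le> r" "r \<le> q" | "q \<le> r" "r \<le> p" | "p \<le> q" "q \<le> r" | "q \<le> p" "p \<le> r"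
    by linarith
  then show ?thesis using assms caseA caseB caseC caseD1 caseD2 by metis
qed

lemma pw1:
  fixes P Q R :: real assumes "P\<ge>0" "Q\<ge>0" "R\<ge>0"
  shows "R * (if P + Q = 0 then 0 else (P-Q)/(P+Q)) - (P-Q)/2 \<ge>
     (1/2) * (sqrt Q - sqrt R)^2 - \<bar>sqrt Q - sqrt R\<bar> * \<bar>sqrt P - sqrt R\<bar> - (sqrt P - sqrt R)^2"
proof (cases "P + Q = 0")
  case True
  then have "P = 0" "Q = 0" using assms by auto
  then show ?thesis using assms by (simp add: power2_eq_square)
next
  case False
  define p q r where "p = sqrt P" "q = sqrt Q" "r = sqrt R"
  have pq: "p\<ge>0" "q\<ge>0" "r\<ge>0" "P = p^2" "Q = q^2" "R = r^2" using assms unfolding p_q_r_def by auto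
  have s0: "p^2+q^2 \<noteq> 0" using False pq(4,5) by simp
  have s1: "0 \<le> p^2+q^2" by simp
  have s: "p^2+q^2 > 0" using s0 s1 by linarith
  have K: "0 \<le> KE p q r (\<bar>q-r\<bar>*\<bar>p-r\<bar>)" using KE_nonneg pq by auto
  have "R * ((P-Q)/(P+Q)) - (P-Q)/2 - ((1/2) * (q - r)^2 - \<bar>q - r\<bar> * \<bar>p - r\<bar> - (p - r)^2)
      = KE p q r (\<bar>q-r\<bar>*\<bar>p-r\<bar>) / (2*(p^2+q^2))"
    using s s0 unfolding KE_def pq by (simp add: field_simps)
  also have "\<dots> \<ge> 0" using K s by simp
  finally show ?thesis using False unfolding p_q_r_def by simp
qed

lemma pw2:
  fixes P Q R b :: real assumes "P\<ge>0" "Q\<ge>0" "R\<ge>0" "b > 0"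
  shows "R * (if P + Q = 0 then 0 else (P-Q)/(P+Q)) - (P-Q)/2 \<ge>
     (1-b)/2 * (sqrt Q - sqrt R)^2 - (1 + 1/(2*b)) * (sqrt P - sqrt R)^2"
proof -
  define u w where "u = \<bar>sqrt Q - sqrt R\<bar>" "w = \<bar>sqrt P - sqrt R\<bar>"
  have "0 \<le> (b*u - w)^2" by simp
  then have "2*b*(u*w) \<le> b*b*u^2 + w^2" by (simp add: power2_eq_square algebra_simps)
  then have uw: "u*w \<le> b/2*u^2 + w^2/(2*b)" using assms(4)
    by (simp add: field_simps power2_eq_square)
  have U: "(sqrt Q - sqrt R)^2 = u^2" "(sqrt P - sqrt R)^2 = w^2" unfolding u_w_def by simp_all
  define L where "L = R * (if P + Q = 0 then 0 else (P-Q)/(P+Q)) - (P-Q)/2"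
  have L1: "L \<ge> 1/2 * u^2 - u*w - w^2" using pw1[OF assms(1-3)] unfolding L_def U u_w_def[symmetric] by simp
  have "(1-b)/2*u^2 - (1 + 1/(2*b))*w^2 = 1/2*u^2 - (b/2*u^2 + w^2/(2*b)) - w^2"
    using assms(4) by (simp add: field_simps)
  then have "L \<ge> (1-b)/2*u^2 - (1 + 1/(2*b))*w^2" using L1 uw by linarith
  then show ?thesis unfolding L_def U .
qed

lemma dens_int:
  assumes "is_density M P"
  shows "integrable M P" "integral\<^sup>L M P = 1" "P \<in> borel_measurable M" "\<And>x. x \<in> space M \<Longrightarrow> P x \<ge> 0"
proof -
  show m: "P \<in> borel_measurable M" and nn: "\<And>x. x \<in> space M \<Longrightarrow> P x \<ge> 0"
    using assms unfolding is_density_def by auto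
  have e: "(\<integral>\<^sup>+ x. ennreal (P x) \<partial>M) = 1" using assms unfolding is_density_def by auto
  show i: "integrable M P" using m nn e by (intro integrableI_nonneg) (auto intro: AE_I2)
  have "(\<integral>\<^sup>+ x. ennreal (P x) \<partial>M) = ennreal (integral\<^sup>L M P)"
    using i nn by (intro nn_integral_eq_integral) (auto intro: AE_I2)
  then show "integral\<^sup>L M P = 1" using e by simp
qed

lemma sqdiff_bound:
  fixes a b :: real assumes "a \<ge> 0" "b \<ge> 0"
  shows "(sqrt a - sqrt b)^2 \<le> a + b"
proof -
  have "(sqrt a - sqrt b)^2 = a + b - 2 * sqrt a * sqrt b" using assms
    by (simp add: power2_eq_square algebra_simps)
  moreover have "sqrt a * sqrt b \<ge> 0" using assms by simp
  ultimately show ?thesis by linarith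
qed

lemma hell_sq:
  assumes "is_density M P" "is_density M Q"
  shows "integrable M (\<lambda>x. (sqrt (P x) - sqrt (Q x))^2)"
    "(hellinger M P Q)^2 = (1/2) * (\<integral> x. (sqrt (P x) - sqrt (Q x))^2 \<partial>M)"
proof -
  note dP = dens_int[OF assms(1)] and dQ = dens_int[OF assms(2)]
  have ii: "integrable M (\<lambda>x. P x + Q x)" using dP dQ by auto
  show i: "integrable M (\<lambda>x. (sqrt (P x) - sqrt (Q x))^2)"
    apply (rule Bochner_Integration.integrable_bound[OF ii])
    using dP dQ apply measurable
    apply (rule AE_I2)
    using dP(4) dQ(4) sqdiff_bound by auto
  have "0 \<le> (\<integral> x. (sqrt (P x) - sqrt (Q x))^2 \<partial>M)" by simp
  then show "(hellinger M P Q)^2 = (1/2) * (\<integral> x. (sqrt (P x) - sqrt (Q x))^2 \<partial>M)"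
    unfolding hellinger_def by (simp add: power_mult_distrib power_divide)
qed

theorem lemma4:
  fixes M :: "'a measure" and P Q R :: "'a \<Rightarrow> real" and \<alpha> :: real and n :: nat
  assumes "sigma_finite_measure M"
    and "is_density M P" and "is_density M Q" and "is_density M R"
    and "1 / sqrt 2 < \<alpha>" and "\<alpha> < 1"
    and "hellinger M Q R \<ge> sqrt 2 / (sqrt 2 * \<alpha> - 1) * hellinger M P R"
    and "n \<ge> 1"
  shows "(\<integral> X. test_stat P Q n X \<partial>(PiM {..<n} (\<lambda>_. density M (\<lambda>x. ennreal (R x)))))
           \<ge> 2 * (1 - \<alpha>\<^sup>2) * (hellinger M Q R)\<^sup>2"
proof -
  define N where "N = density M (\<lambda>x. ennreal (R x))"
  define t where "t = tsum_term P Q"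
  note dP = dens_int[OF assms(2)] and dQ = dens_int[OF assms(3)] and dR = dens_int[OF assms(4)]
  have tm[measurable]: "t \<in> borel_measurable M"
    unfolding t_def tsum_term_def using dP dQ by measurable
  have tb: "\<bar>t x\<bar> \<le> 1" if "x \<in> space M" for x
  proof -
    have "P x \<ge> 0" "Q x \<ge> 0" using dP dQ that by auto
    then show ?thesis unfolding t_def tsum_term_def by (auto simp: abs_le_iff divide_le_eq_1 field_simps)
  qed
  have sN: "sets N = sets M" "space N = space M" unfolding N_def by auto
  have probN: "prob_space N"
  proof (rule prob_spaceI)
    have "emeasure N (space N) = (\<integral>\<^sup>+ x. ennreal (R x) * indicator (space M) x \<partial>M)"
      unfolding N_def using dR by (subst emeasure_density) auto
    also have "\<dots> = (\<integral>\<^sup>+ x. ennreal (R x) \<partial>M)"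
      by (intro nn_integral_cong) auto
    also have "\<dots> = 1" using assms(4) unfolding is_density_def by auto
    finally show "emeasure N (space N) = 1" .
  qed
  let ?Pi = "PiM {..<n} (\<lambda>_. N)"
  have probPi: "prob_space ?Pi" using probN by (intro prob_space_PiM) auto
  then interpret Pi: prob_space ?Pi .
  have tN[measurable]: "t \<in> borel_measurable N" using tm by (simp add: measurable_def sN)
  have comp: "(\<integral> X. t (X i) \<partial>?Pi) = (\<integral> x. t x \<partial>N)" if "i < n" for i
  proof -
    have "(\<integral> x. t x \<partial>N) = (\<integral> x. t x \<partial>distr ?Pi N (\<lambda>\<omega>. \<omega> i))"
      using distr_PiM_component[of "{..<n}" "\<lambda>_. N" i] probN that by simp
    also have "\<dots> = (\<integral> X. t (X i) \<partial>?Pi)"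
      using that by (intro integral_distr) auto
    finally show ?thesis by simp
  qed
  have intc: "integrable ?Pi (\<lambda>X. t (X i))" if "i < n" for i
  proof (rule Pi.integrable_const_bound[where B=1])
    show "AE X in ?Pi. norm (t (X i)) \<le> 1"
    proof (rule AE_I2)
      fix X assume "X \<in> space ?Pi"
      then have "X i \<in> space N" using that by (auto simp: space_PiM)
      then show "norm (t (X i)) \<le> 1" using tb sN by auto
    qed
    show "(\<lambda>X. t (X i)) \<in> borel_measurable ?Pi"
      using measurable_compose[OF measurable_component_singleton[of i "{..<n}" "\<lambda>_. N"] tN] that by simp
  qed
  have E: "(\<integral> X. test_stat P Q n X \<partial>?Pi) = (\<integral> x. t x \<partial>N)"
  proof -
    have "(\<integral> X. test_stat P Q n X \<partial>?Pi) = (1 / real n) * (\<Sum>i<n. (\<integral> X. t (X i) \<partial>?Pi))"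
    proof -
      have "(\<integral> X. (\<Sum>i<n. t (X i)) \<partial>?Pi) = (\<Sum>i<n. (\<integral> X. t (X i) \<partial>?Pi))"
        using Bochner_Integration.integral_sum[of "{..<n}" ?Pi "\<lambda>i X. t (X i)"] intc by auto
      then show ?thesis unfolding test_stat_def t_def[symmetric] by simp
    qed
    also have "\<dots> = (1 / real n) * (\<Sum>i<n. (\<integral> x. t x \<partial>N))"
      using comp by simp
    also have "\<dots> = (\<integral> x. t x \<partial>N)" using assms(8) by simp
    finally show ?thesis .
  qed
  have E2: "(\<integral> x. t x \<partial>N) = (\<integral> x. R x * t x \<partial>M)"
    unfolding N_def using dR by (subst integral_density) (auto intro: AE_I2)
  define c where "c = sqrt 2"
  have c: "c > 0" "c * c = 2" "c \<ge> 1" unfolding c_def by auto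
  define b where "b = \<alpha> - 1 / c"
  have bpos: "b > 0" using assms(5) unfolding b_def c_def by simp
  define U where "U = (\<lambda>x. (sqrt (Q x) - sqrt (R x))^2)"
  define W where "W = (\<lambda>x. (sqrt (P x) - sqrt (R x))^2)"
  note hQR = hell_sq[OF assms(3) assms(4)] and hPR = hell_sq[OF assms(2) assms(4)]
  have iT: "integrable M (\<lambda>x. R x * t x)"
    apply (rule Bochner_Integration.integrable_bound[OF dR(1)])
    apply (rule borel_measurable_times[OF dR(3) tm])
    apply (rule AE_I2)
    using tb dR(4) by (auto simp: abs_mult intro: mult_left_le)
  have iL: "integrable M (\<lambda>x. R x * t x - (P x - Q x)/2)" using iT dP dQ by auto
  have iG: "integrable M (\<lambda>x. (1-b)/2 * U x - (1 + 1/(2*b)) * W x)"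
    using hQR(1) hPR(1) unfolding U_def W_def by auto
  have mono: "(\<integral> x. (1-b)/2 * U x - (1 + 1/(2*b)) * W x \<partial>M) \<le> (\<integral> x. R x * t x - (P x - Q x)/2 \<partial>M)"
  proof (rule integral_mono[OF iG iL])
    fix x assume "x \<in> space M"
    then have "P x \<ge> 0" "Q x \<ge> 0" "R x \<ge> 0" using dP dQ dR by auto
    from pw2[OF this bpos] show "(1-b)/2 * U x - (1 + 1/(2*b)) * W x \<le> R x * t x - (P x - Q x)/2"
      unfolding U_def W_def t_def tsum_term_def by simp
  qed
  have L: "(\<integral> x. R x * t x - (P x - Q x)/2 \<partial>M) = (\<integral> x. R x * t x \<partial>M)"
    using iT dP dQ by simp
  have G: "(\<integral> x. (1-b)/2 * U x - (1 + 1/(2*b)) * W x \<partial>M)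
      = (1-b) * (hellinger M Q R)^2 - (2 + 1/b) * (hellinger M P R)^2"
  proof -
    have IU: "(\<integral> x. U x \<partial>M) = 2 * (hellinger M Q R)^2" using hQR(2) unfolding U_def by simp
    have IW: "(\<integral> x. W x \<partial>M) = 2 * (hellinger M P R)^2" using hPR(2) unfolding W_def by simp
    have "(\<integral> x. (1-b)/2 * U x - (1 + 1/(2*b)) * W x \<partial>M)
        = (1-b)/2 * (\<integral> x. U x \<partial>M) - (1 + 1/(2*b)) * (\<integral> x. W x \<partial>M)"
      using hQR(1) hPR(1) unfolding U_def W_def by simp
    then show ?thesis unfolding IU IW using bpos by (simp add: field_simps)
  qed
  define h where "h = hellinger M Q R"
  define e where "e = hellinger M P R"
  have e0: "e \<ge> 0" unfolding e_def hellinger_def by simp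
  have "sqrt 2 / (sqrt 2 * \<alpha> - 1) = 1 / b"
    using c bpos unfolding b_def c_def[symmetric] by (simp add: field_simps)
  then have "h \<ge> e / b" using assms(7) unfolding h_def e_def by simp
  then have eb: "e \<le> b * h" using bpos by (simp add: field_simps)
  then have "e^2 \<le> (b*h)^2" using e0 by (intro power_mono) auto
  then have "(2 + 1/b) * e^2 \<le> (2 + 1/b) * (b*h)^2" using bpos by (intro mult_left_mono) auto
  moreover have "(2 + 1/b) * (b*h)^2 = (2*b^2 + b) * h^2" using bpos by (simp add: field_simps power2_eq_square)
  ultimately have main: "(\<integral> x. R x * t x \<partial>M) \<ge> (1 - 2*b - 2*b^2) * h^2"
    using mono L G unfolding h_def[symmetric] e_def[symmetric] by (simp add: algebra_simps)
  have "2 * (1 - \<alpha>^2) = 1 - 2*c*b - 2*b^2"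
    unfolding b_def using c by (simp add: field_simps power2_eq_square)
  also have "\<dots> \<le> 1 - 2*b - 2*b^2" using c bpos by (simp add: mult_right_mono)
  finally have "2 * (1 - \<alpha>^2) * h^2 \<le> (1 - 2*b - 2*b^2) * h^2" by (intro mult_right_mono) auto
  then show ?thesis using main E E2 unfolding N_def h_def by simp
qed

end
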